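(* If $L\subset\mathbb{R}^3$ is a link of thickness $\tau>0$, then any points $x,y\in L$ with $|x-y|<2\tau$ are connected by an arc of $L$ of length at most \[ 2\tau\arcsin\frac{|x-y|}{2\tau}\;\le\;\frac{\pi}{2}\,|x-y|. \]
   Context: A link is a disjoint union of finitely many simple closed curves in $\mathbb{R}^3$. For distinct $x,y,z\in\mathbb{R}^3$, $r(x,y,z)$ is the radius of the circle through them ($\infty$ if collinear); the thickness is $\tau(L)=\inf r(x,y,z)$ over pairwise distinct $x,y,z\in L$. *)

theory Defs
  imports "HOL-Analysis.Analysis"
begin

definition simple_closed_curve :: "(real^3) set \<Rightarrow> bool" where
  "simple_closed_curve C \<longleftrightarrow>
     (\<exists>g. simple_path g \<and> pathstart g = pathfinish g \<and> path_image g = C)"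

definition is_link :: "(real^3) set \<Rightarrow> bool" where
  "is_link L \<longleftrightarrow>
     (\<exists>\<C>. finite \<C> \<and> (\<forall>C\<in>\<C>. simple_closed_curve C) \<and>
          pairwise disjnt \<C> \<and> \<Union>\<C> = L)"

definition circ_radius :: "real^3 \<Rightarrow> real^3 \<Rightarrow> real^3 \<Rightarrow> ereal" where
  "circ_radius x y z =
     (if collinear {x, y, z} then \<infinity>
      else ereal (THE R. \<exists>c \<in> affine hull {x, y, z}.
                    dist c x = R \<and> dist c y = R \<and> dist c z = R))"

definition thickness :: "(real^3) set \<Rightarrow> ereal" where
  "thickness L = (INF (x, y, z) \<in> {(x, y, z). x \<in> L \<and> y \<in> L \<and> z \<in> L \<and>
                      x \<noteq> y \<and> y \<noteq> z \<and> x \<noteq> z}. circ_radius x y z)"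

definition path_length :: "(real \<Rightarrow> 'a::metric_space) \<Rightarrow> ereal" where
  "path_length g = (SUP (n, t) \<in> {(n, t). t 0 = 0 \<and> t n = 1 \<and>
                        (\<forall>i<n. t i \<le> t (Suc i))}.
                      ereal (\<Sum>i<n. dist (g (t i)) (g (t (Suc i)))))"

end

theory Submission
  imports Defs
begin

definition thick_cond :: "real \<Rightarrow> (real^3) set \<Rightarrow> bool" where
  "thick_cond \<tau> L \<longleftrightarrow> (\<forall>x\<in>L. \<forall>y\<in>L. \<forall>z\<in>L. x \<noteq> y \<and> y \<noteq> z \<and> x \<noteq> z \<longrightarrow>
     4*\<tau>^2*(((x-z)\<bullet>(x-z))*((y-z)\<bullet>(y-z)) - ((x-z) \<bullet> (y-z))^2)
       \<le> ((x-z)\<bullet>(x-z))*((y-z)\<bullet>(y-z))*((x-y)\<bullet>(x-y)))"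

lemma gram_nonneg:
  fixes a b :: "real^3"
  shows "((a \<bullet> b))^2 \<le> (a\<bullet>a) * (b\<bullet>b)"
proof -
  have "\<bar>a \<bullet> b\<bar> \<le> norm a * norm b" by (rule Cauchy_Schwarz_ineq2)
  then have "\<bar>a \<bullet> b\<bar>^2 \<le> (norm a * norm b)^2"
    by (intro power_mono) auto
  then show ?thesis by (simp only: power_mult_distrib power2_norm_eq_inner power2_abs)
qed

lemma collinear_gram0:
  fixes x y z :: "real^3"
  assumes "collinear {x,y,z}"
  shows "((x-z)\<bullet>(x-z))*((y-z)\<bullet>(y-z)) - ((x-z) \<bullet> (y-z))^2 = 0"
proof -
  obtain u where u: "\<forall>p\<in>{x,y,z}. \<forall>q\<in>{x,y,z}. \<exists>c. p - q = c *\<^sub>R u"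
    using assms unfolding collinear_def by blast
  obtain c1 where c1: "x - z = c1 *\<^sub>R u" using u by blast
  obtain c2 where c2: "y - z = c2 *\<^sub>R u" using u by blast
  show ?thesis unfolding c1 c2
    by (simp add: power2_eq_square algebra_simps)
qed

lemma noncollinear_gram_pos:
  fixes x y z :: "real^3"
  assumes "\<not> collinear {x,y,z}" "y \<noteq> z"
  shows "((x-z)\<bullet>(x-z))*((y-z)\<bullet>(y-z)) - ((x-z) \<bullet> (y-z))^2 > 0"
proof (rule ccontr)
  define a where "a = x - z"
  define b where "b = y - z"
  assume "\<not> ?thesis"
  then have D0: "(a\<bullet>a)*(b\<bullet>b) - (a \<bullet> b)^2 = 0"
    using gram_nonneg[of a b] unfolding a_def b_def by linarith
  have "(((b\<bullet>b) *\<^sub>R a - (a \<bullet> b) *\<^sub>R b) \<bullet> ((b\<bullet>b) *\<^sub>R a - (a \<bullet> b) *\<^sub>R b))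
        = (b\<bullet>b) * ((a\<bullet>a)*(b\<bullet>b) - (a \<bullet> b)^2)"
    by (simp add: inner_diff_left inner_diff_right inner_commute
        power2_eq_square algebra_simps)
  then have eq: "(b\<bullet>b) *\<^sub>R a = (a \<bullet> b) *\<^sub>R b" using D0 by simp
  have "b \<noteq> 0" using assms(2) b_def by simp
  then have bb: "b\<bullet>b \<noteq> 0" by simp
  have "a = inverse (b\<bullet>b) *\<^sub>R ((b\<bullet>b) *\<^sub>R a)" using bb by simp
  also have "\<dots> = inverse (b\<bullet>b) *\<^sub>R ((a \<bullet> b) *\<^sub>R b)" using eq by simp
  also have "\<dots> = ((a \<bullet> b) / (b\<bullet>b)) *\<^sub>R b" by (simp add: divide_inverse_commute)
  finally have ab: "a = ((a \<bullet> b) / (b\<bullet>b)) *\<^sub>R b" .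
  have "collinear {0, y - z, x - z}"
    unfolding collinear_lemma using ab a_def b_def by metis
  then have "collinear {y, z, x}"
    using collinear_3[of y z x] by simp
  then show False using assms(1) by (simp add: insert_commute)
qed

lemma circ_eqs:
  fixes a b e :: "real^3" and u v :: real
  assumes e: "e = u *\<^sub>R a + v *\<^sub>R b"
    and D: "(a\<bullet>a)*(b\<bullet>b) - (a\<bullet>b)^2 > 0"
    and ea: "2 * (e \<bullet> a) = a \<bullet> a" and eb: "2 * (e \<bullet> b) = b \<bullet> b"
  shows "e \<bullet> e = (a\<bullet>a)*(b\<bullet>b)*((a-b)\<bullet>(a-b)) / (4*((a\<bullet>a)*(b\<bullet>b) - (a\<bullet>b)^2))"
proof -
  define A where "A = a\<bullet>a"
  define B where "B = b\<bullet>b"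
  define Pp where "Pp = a\<bullet>b"
  define D where "D = A*B - Pp^2"
  have D0: "D > 0" using D unfolding D_def A_def B_def Pp_def .
  have e1: "2 * (u * A + v * Pp) = A" using ea unfolding e A_def Pp_def
    by (simp add: inner_add_left inner_add_right inner_commute)
  have e2: "2 * (u * Pp + v * B) = B" using eb unfolding e B_def Pp_def
    by (simp add: inner_add_left inner_add_right inner_commute)
  have ee: "e \<bullet> e = u*(e\<bullet>a) + v * (e\<bullet>b)" unfolding e
    by (simp add: inner_add_left inner_add_right inner_commute algebra_simps)
  have ee2: "e \<bullet> e = (u*A + v * B)/2"
  proof -
    have "e \<bullet> e = (u*(2*(e\<bullet>a)) + v * (2*(e\<bullet>b)))/2" using ee by simp
    then show ?thesis using ea eb unfolding A_def B_def by simp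
  qed
  have uD: "2*u*D = B*(A-Pp)"
  proof -
    have "2*u*D = B*(2 * (u * A + v * Pp)) - Pp*(2 * (u * Pp + v * B))" unfolding D_def by algebra
    then have "2*u*D = B*A - Pp*B" unfolding e1 e2 .
    then show ?thesis by (simp add: algebra_simps)
  qed
  have vD: "2* v * D = A*(B-Pp)"
  proof -
    have "2* v * D = A*(2 * (u * Pp + v * B)) - Pp*(2 * (u * A + v * Pp))" unfolding D_def by algebra
    then have "2* v * D = A*B - Pp*A" unfolding e1 e2 .
    then show ?thesis by (simp add: algebra_simps)
  qed
  have ab: "(a-b)\<bullet>(a-b) = A + B - 2*Pp" unfolding A_def B_def Pp_def
    by (simp add: inner_diff_left inner_diff_right inner_commute)
  have "(e\<bullet>e) * (4*D) = A*(2*u*D) + B*(2* v * D)"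
  proof -
    have "(e\<bullet>e) * (4*D) = (2*(e\<bullet>e))*(2*D)" by simp
    also have "\<dots> = (u*A + v * B)*(2*D)" using ee2 by simp
    finally show ?thesis by (simp add: algebra_simps)
  qed
  also have "\<dots> = A*B*(A+B-2*Pp)" unfolding uD vD by (simp add: algebra_simps)
  finally have "(e\<bullet>e) * (4*D) = A*B*(A+B-2*Pp)" .
  then have "e\<bullet>e = A*B*(A+B-2*Pp) / (4*D)" using D0 by (simp add: field_simps)
  then show ?thesis using ab unfolding D_def A_def B_def Pp_def by simp
qed

lemma circ_radius_val:
  fixes x y z :: "real^3"
  assumes nc: "\<not> collinear {x,y,z}"
  shows "circ_radius x y z = ereal (sqrt (((x-z)\<bullet>(x-z))*((y-z)\<bullet>(y-z))*((x-y)\<bullet>(x-y))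
            / (4*(((x-z)\<bullet>(x-z))*((y-z)\<bullet>(y-z)) - ((x-z) \<bullet> (y-z))^2))))"
proof -
  define a where "a = x - z"
  define b where "b = y - z"
  define A where "A = a\<bullet>a"
  define B where "B = b\<bullet>b"
  define Pp where "Pp = a\<bullet>b"
  define D where "D = A*B - Pp^2"
  define Q where "Q = A*B*((a-b)\<bullet>(a-b)) / (4*D)"
  have yz: "y \<noteq> z" using nc by (auto simp: collinear_2 insert_commute)
  have D0: "D > 0" using noncollinear_gram_pos[OF nc yz]
    unfolding D_def A_def B_def Pp_def a_def b_def .
  have amb: "a - b = x - y" unfolding a_def b_def by simp
  have key: "R = sqrt Q" if hc: "c \<in> affine hull {x,y,z}" "dist c x = R" "dist c y = R" "dist c z = R"
    for c R
  proof -
    obtain u v w where uvw: "c = u *\<^sub>R x + v *\<^sub>R y + w *\<^sub>R z" "u + v + w = 1"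
      using hc affine_hull_3[of x y z] by auto
    define e where "e = c - z"
    have e: "e = u *\<^sub>R a + v *\<^sub>R b"
    proof -
      have "z = (u+v+w) *\<^sub>R z" using uvw(2) by simp
      then have "e = u *\<^sub>R x + v *\<^sub>R y + w *\<^sub>R z - (u+v+w) *\<^sub>R z"
        unfolding e_def uvw(1) by simp
      then show ?thesis unfolding a_def b_def by (simp add: algebra_simps)
    qed
    have cxz: "(c-x)\<bullet>(c-x) = (c-z)\<bullet>(c-z)"
      using that(2,4) by (simp add: dist_norm power2_norm_eq_inner[symmetric])
    have cyz: "(c-y)\<bullet>(c-y) = (c-z)\<bullet>(c-z)"
      using that(3,4) by (simp add: dist_norm power2_norm_eq_inner[symmetric])
    have "c - x = e - a" unfolding e_def a_def by simp
    then have ea: "2*(e\<bullet>a) = a\<bullet>a" using cxz unfolding e_def[symmetric]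
      by (simp add: inner_diff_left inner_diff_right inner_commute)
    have "c - y = e - b" unfolding e_def b_def by simp
    then have eb: "2*(e\<bullet>b) = b\<bullet>b" using cyz unfolding e_def[symmetric]
      by (simp add: inner_diff_left inner_diff_right inner_commute)
    have "e\<bullet>e = Q" using circ_eqs[OF e _ ea eb] D0
      unfolding Q_def D_def A_def B_def Pp_def by simp
    moreover have "R = sqrt (e\<bullet>e)" using that(4) unfolding e_def
      by (simp add: dist_norm norm_eq_sqrt_inner)
    ultimately show ?thesis by simp
  qed
  define u where "u = B*(A-Pp)/(2*D)"
  define v where "v = A*(B-Pp)/(2*D)"
  define c where "c = u *\<^sub>R x + v *\<^sub>R y + (1-u-v) *\<^sub>R z"
  have chull: "c \<in> affine hull {x,y,z}" unfolding affine_hull_3 c_def by force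
  define e where "e = c - z"
  have e: "e = u *\<^sub>R a + v *\<^sub>R b" unfolding e_def c_def a_def b_def
    by (simp add: algebra_simps)
  have ea: "2*(e\<bullet>a) = a\<bullet>a"
  proof -
    have "2*(e\<bullet>a) = 2 * (u * A + v * Pp)" unfolding e A_def Pp_def
      by (simp add: inner_add_left inner_add_right inner_commute)
    also have "\<dots> = (B*(A-Pp)*A + A*(B-Pp)*Pp)/D" unfolding u_def v_def using D0
      by (simp add: field_simps)
    also have "\<dots> = A*D/D" unfolding D_def by (simp add: algebra_simps power2_eq_square)
    also have "\<dots> = a\<bullet>a" using D0 A_def by simp
    finally show ?thesis .
  qed
  have eb: "2*(e\<bullet>b) = b\<bullet>b"
  proof -
    have "2*(e\<bullet>b) = 2 * (u * Pp + v * B)" unfolding e B_def Pp_def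
      by (simp add: inner_add_left inner_add_right inner_commute)
    also have "\<dots> = (B*(A-Pp)*Pp + A*(B-Pp)*B)/D" unfolding u_def v_def using D0
      by (simp add: field_simps)
    also have "\<dots> = B*D/D" unfolding D_def by (simp add: algebra_simps power2_eq_square)
    also have "\<dots> = b\<bullet>b" using D0 B_def by simp
    finally show ?thesis .
  qed
  have cx: "c - x = e - a" unfolding e_def a_def by simp
  have cy: "c - y = e - b" unfolding e_def b_def by simp
  have dx: "dist c x = norm e" unfolding dist_norm cx norm_eq_sqrt_inner using ea
    by (simp add: inner_diff_left inner_diff_right inner_commute)
  have dy: "dist c y = norm e" unfolding dist_norm cy norm_eq_sqrt_inner using eb
    by (simp add: inner_diff_left inner_diff_right inner_commute)
  have dz: "dist c z = norm e" unfolding dist_norm e_def by simp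
  have ex: "\<exists>c \<in> affine hull {x, y, z}. dist c x = norm e \<and> dist c y = norm e \<and> dist c z = norm e"
    using chull dx dy dz by blast
  have "(THE R. \<exists>c \<in> affine hull {x, y, z}. dist c x = R \<and> dist c y = R \<and> dist c z = R) = sqrt Q"
  proof (rule the_equality)
    show "\<exists>c \<in> affine hull {x, y, z}. dist c x = sqrt Q \<and> dist c y = sqrt Q \<and> dist c z = sqrt Q"
      using ex key chull dx dy dz by metis
  next
    fix R assume "\<exists>c \<in> affine hull {x, y, z}. dist c x = R \<and> dist c y = R \<and> dist c z = R"
    then show "R = sqrt Q" using key by blast
  qed
  then show ?thesis using nc unfolding circ_radius_def Q_def D_def A_def B_def Pp_def amb a_def b_def
    by simp
qed

lemma thick_from:
  fixes L :: "(real^3) set"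
  assumes th: "thickness L = ereal \<tau>" and tp: "\<tau> > 0"
  shows "thick_cond \<tau> L"
  unfolding thick_cond_def
proof (intro ballI impI)
  fix x y z assume xyz: "x \<in> L" "y \<in> L" "z \<in> L" and d: "x \<noteq> y \<and> y \<noteq> z \<and> x \<noteq> z"
  define A where "A = (x-z)\<bullet>(x-z)"
  define B where "B = (y-z)\<bullet>(y-z)"
  define C where "C = (x-y)\<bullet>(x-y)"
  define D where "D = A*B - ((x-z) \<bullet> (y-z))^2"
  have "thickness L \<le> circ_radius x y z"
    unfolding thickness_def
    by (rule INF_lower2[where i="(x,y,z)"]) (use xyz d in auto)
  then have le: "ereal \<tau> \<le> circ_radius x y z" using th by simp
  have ABC: "A \<ge> 0" "B \<ge> 0" "C \<ge> 0" unfolding A_def B_def C_def by auto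
  show "4*\<tau>^2*(((x-z)\<bullet>(x-z))*((y-z)\<bullet>(y-z)) - ((x-z) \<bullet> (y-z))^2)
       \<le> ((x-z)\<bullet>(x-z))*((y-z)\<bullet>(y-z))*((x-y)\<bullet>(x-y))"
  proof (cases "collinear {x,y,z}")
    case True
    then show ?thesis using collinear_gram0[OF True] ABC unfolding A_def B_def C_def by simp
  next
    case False
    have D0: "D > 0" using noncollinear_gram_pos[OF False] d unfolding D_def A_def B_def by simp
    have "\<tau> \<le> sqrt (A*B*C/(4*D))" using le circ_radius_val[OF False]
      unfolding A_def B_def C_def D_def by simp
    then have "\<tau>^2 \<le> (sqrt (A*B*C/(4*D)))^2" using tp by (intro power_mono) auto
    also have "\<dots> = A*B*C/(4*D)" using ABC D0 by simp
    finally have "\<tau>^2 * (4*D) \<le> A*B*C" using D0 by (simp add: field_simps)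
    then show ?thesis unfolding A_def B_def C_def D_def by (simp add: algebra_simps)
  qed
qed

definition Cc :: "real \<Rightarrow> real^3 \<Rightarrow> real^3 \<Rightarrow> real" where
  "Cc \<tau> x y = sqrt (1 - (dist x y)^2 / (4*\<tau>^2))"

definition lensP :: "real \<Rightarrow> real^3 \<Rightarrow> real^3 \<Rightarrow> real^3 \<Rightarrow> bool" where
  "lensP \<tau> x y z \<longleftrightarrow> (x-z)\<bullet>(y-z) \<le> - (Cc \<tau> x y * norm (x-z) * norm (y-z))"

definition outP :: "real \<Rightarrow> real^3 \<Rightarrow> real^3 \<Rightarrow> real^3 \<Rightarrow> bool" where
  "outP \<tau> x y z \<longleftrightarrow> (x-z)\<bullet>(y-z) \<ge> Cc \<tau> x y * norm (x-z) * norm (y-z)"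

lemma Cc_bounds:
  assumes "\<tau> > 0" "dist x y < 2*\<tau>"
  shows "Cc \<tau> x y > 0" "Cc \<tau> x y \<le> 1"
proof -
  have "(dist x y)^2 < (2*\<tau>)^2" using assms by (intro power_strict_mono) auto
  then have "(dist x y)^2 / (4*\<tau>^2) < 1" using assms by (simp add: field_simps power_mult_distrib)
  then show "Cc \<tau> x y > 0" unfolding Cc_def by simp
  have "(dist x y)^2 / (4*\<tau>^2) \<ge> 0" by simp
  then show "Cc \<tau> x y \<le> 1" unfolding Cc_def by simp
qed

lemma Cc_sq:
  assumes "\<tau> > 0" "dist x y < 2*\<tau>"
  shows "(Cc \<tau> x y)^2 = 1 - (dist x y)^2 / (4*\<tau>^2)"
proof -
  have "(dist x y)^2 < (2*\<tau>)^2" using assms by (intro power_strict_mono) auto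
  then have "(dist x y)^2 / (4*\<tau>^2) < 1" using assms by (simp add: field_simps power_mult_distrib)
  then show ?thesis unfolding Cc_def by simp
qed

lemma allowed:
  assumes tc: "thick_cond \<tau> L" and tp: "\<tau> > 0"
    and xyz: "x \<in> L" "y \<in> L" "z \<in> L" "x \<noteq> y" "z \<noteq> x" "z \<noteq> y"
    and d: "dist x y < 2*\<tau>"
  shows "lensP \<tau> x y z \<or> outP \<tau> x y z"
proof -
  define a where "a = x - z"
  define b where "b = y - z"
  define Pz where "Pz = a \<bullet> b"
  define K where "K = Cc \<tau> x y * norm a * norm b"
  have "4*\<tau>^2*((a\<bullet>a)*(b\<bullet>b) - Pz^2) \<le> (a\<bullet>a)*(b\<bullet>b)*((x-y)\<bullet>(x-y))"
    using tc xyz unfolding thick_cond_def a_def b_def Pz_def by auto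
  moreover have "(x-y)\<bullet>(x-y) = (dist x y)^2" by (simp add: dist_norm power2_norm_eq_inner)
  ultimately have h: "4*\<tau>^2*((a\<bullet>a)*(b\<bullet>b) - Pz^2) \<le> (a\<bullet>a)*(b\<bullet>b)*(dist x y)^2" by simp
  have "K^2 = (1 - (dist x y)^2 / (4*\<tau>^2)) * ((a\<bullet>a)*(b\<bullet>b))"
    unfolding K_def using Cc_sq[OF tp d]
    by (simp add: power_mult_distrib power2_norm_eq_inner)
  also have "\<dots> = (a\<bullet>a)*(b\<bullet>b) - (a\<bullet>a)*(b\<bullet>b)*(dist x y)^2 / (4*\<tau>^2)"
    using tp by (simp add: field_simps)
  also have "\<dots> \<le> Pz^2"
  proof -
    have "(a\<bullet>a)*(b\<bullet>b)*(dist x y)^2 / (4*\<tau>^2) \<ge> (a\<bullet>a)*(b\<bullet>b) - Pz^2"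
      using h tp by (simp add: field_simps)
    then show ?thesis by linarith
  qed
  finally have "K^2 \<le> \<bar>Pz\<bar>^2" by simp
  then have "K \<le> \<bar>Pz\<bar>" by (rule power2_le_imp_le) simp
  then show ?thesis unfolding lensP_def outP_def K_def Pz_def a_def b_def by linarith
qed

lemma lens_closer:
  assumes tp: "\<tau> > 0" and d: "dist x y < 2*\<tau>" and l: "lensP \<tau> x y z"
    and zx: "z \<noteq> x" and zy: "z \<noteq> y"
  shows "dist x z < dist x y" "dist y z < dist x y"
proof -
  define a where "a = x - z"
  define b where "b = y - z"
  have "Cc \<tau> x y * norm a * norm b > 0"
    using Cc_bounds[OF tp d] zx zy unfolding a_def b_def by simp
  then have neg: "a \<bullet> b < 0" using l unfolding lensP_def a_def b_def by linarith
  have "(dist x y)^2 = (a - b)\<bullet>(a - b)" unfolding a_def b_def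
    by (simp add: dist_norm power2_norm_eq_inner)
  also have "\<dots> = a\<bullet>a + b\<bullet>b - 2*(a\<bullet>b)"
    by (simp add: inner_diff_left inner_diff_right inner_commute)
  finally have e: "(dist x y)^2 = a\<bullet>a + b\<bullet>b - 2*(a\<bullet>b)" .
  have "(dist x z)^2 = a\<bullet>a" unfolding a_def by (simp add: dist_norm power2_norm_eq_inner)
  moreover have "(dist y z)^2 = b\<bullet>b" unfolding b_def by (simp add: dist_norm power2_norm_eq_inner)
  moreover have "a\<bullet>a \<ge> 0" "b\<bullet>b \<ge> 0" by auto
  ultimately have "(dist x z)^2 < (dist x y)^2" "(dist y z)^2 < (dist x y)^2" using e neg by linarith+
  then show "dist x z < dist x y" "dist y z < dist x y"
    by (auto simp: power_less_imp_less_base)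
qed

lemma closed_lens: "closed {z. lensP \<tau> x y z}"
  unfolding lensP_def by (intro closed_Collect_le continuous_intros)

lemma closed_out: "closed {z. outP \<tau> x y z}"
  unfolding outP_def by (intro closed_Collect_le continuous_intros)

lemma not_lens_and_out:
  assumes tp: "\<tau> > 0" and d: "dist x y < 2*\<tau>" and "z \<noteq> x" "z \<noteq> y"
    and "lensP \<tau> x y z" "outP \<tau> x y z"
  shows False
proof -
  have "Cc \<tau> x y * norm (x-z) * norm (y-z) > 0"
    using Cc_bounds[OF tp d] assms(3,4) by simp
  then show False using assms(5,6) unfolding lensP_def outP_def by linarith
qed

lemma dichotomy:
  assumes tc: "thick_cond \<tau> L" and tp: "\<tau> > 0"
    and S: "connected S" "S \<subseteq> L" "x \<notin> S" "y \<notin> S"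
    and xy: "x \<in> L" "y \<in> L" "x \<noteq> y" and d: "dist x y < 2*\<tau>"
  shows "(\<forall>z\<in>S. lensP \<tau> x y z) \<or> (\<forall>z\<in>S. outP \<tau> x y z)"
proof -
  let ?A = "{z. lensP \<tau> x y z}" and ?B = "{z. outP \<tau> x y z}"
  have cov: "S \<subseteq> ?A \<union> ?B"
    using allowed[OF tc tp xy(1,2) _ xy(3) _ _ d] S by blast
  have dis: "?A \<inter> ?B \<inter> S = {}"
    using not_lens_and_out[OF tp d] S by fastforce
  have "\<not> (?A \<inter> S \<noteq> {} \<and> ?B \<inter> S \<noteq> {})"
    using S(1) closed_lens[of \<tau> x y] closed_out[of \<tau> x y] cov dis
    unfolding connected_closed by blast
  then show ?thesis using cov by blast
qed

lemma loc_contra: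
  assumes tc: "thick_cond \<tau> L" and tp: "\<tau> > 0"
    and pts: "p \<in> L" "u \<in> L" "v \<in> L" "u \<noteq> v" "u \<noteq> p" "v \<noteq> p"
    and d: "dist p q < 2*\<tau>"
    and ou: "outP \<tau> p q u" and ov: "outP \<tau> p q v"
    and du: "dist p u = \<epsilon>" and dv: "dist p v = \<epsilon>"
    and small: "\<epsilon> * (4 + dist p q / \<tau>) < 2 * Cc \<tau> p q * dist p q"
  shows False
proof -
  define dd where "dd = dist p q"
  define C where "C = Cc \<tau> p q"
  have C01: "C > 0" "C \<le> 1" using Cc_bounds[OF tp d] C_def by auto
  define au where "au = p - u"
  define av where "av = p - v"
  define w where "w = q - p"
  have nau: "norm au = \<epsilon>" using du unfolding au_def by (simp add: dist_norm)
  have nav: "norm av = \<epsilon>" using dv unfolding av_def by (simp add: dist_norm)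
  have nw: "norm w = dd" unfolding w_def dd_def by (simp add: dist_norm norm_minus_commute)
  have ep: "\<epsilon> > 0" using du pts by auto
  have bound: "a \<bullet> w \<ge> C*\<epsilon>*(dd-\<epsilon>) - \<epsilon>^2"
    if na: "norm a = \<epsilon>" and oa: "a \<bullet> (w + a) \<ge> C * norm a * norm (w + a)" for a
  proof -
    have "dd \<le> norm (w + a) + norm a"
      using norm_triangle_ineq4[of "w + a" a] nw by simp
    then have "norm (w+a) \<ge> dd - \<epsilon>" using na by simp
    then have "C*\<epsilon>*norm (w+a) \<ge> C*\<epsilon>*(dd-\<epsilon>)"
      using C01 ep by (intro mult_left_mono) auto
    moreover have "a \<bullet> (w + a) = a \<bullet> w + \<epsilon>^2"
      using na by (simp add: inner_add_right flip: power2_norm_eq_inner)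
    ultimately show ?thesis using oa na by (simp add: algebra_simps)
  qed
  have "q - u = w + au" unfolding w_def au_def by simp
  then have b1: "au \<bullet> w \<ge> C*\<epsilon>*(dd-\<epsilon>) - \<epsilon>^2"
    using bound[OF nau] ou nau unfolding outP_def au_def[symmetric] C_def by simp
  have "q - v = w + av" unfolding w_def av_def by simp
  then have b2: "av \<bullet> w \<ge> C*\<epsilon>*(dd-\<epsilon>) - \<epsilon>^2"
    using bound[OF nav] ov nav unfolding outP_def av_def[symmetric] C_def by simp
  define s where "s = au + av"
  have sw: "s \<bullet> w \<ge> 2*(C*\<epsilon>*(dd-\<epsilon>) - \<epsilon>^2)"
    using b1 b2 unfolding s_def by (simp add: inner_add_left)
  have sw2: "s \<bullet> w \<le> norm s * dd" using norm_cauchy_schwarz[of s w] nw by simp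
  define Pv where "Pv = au \<bullet> av"
  have th: "4*\<tau>^2*(((u-p)\<bullet>(u-p))*((v-p)\<bullet>(v-p)) - ((u-p) \<bullet> (v-p))^2)
       \<le> ((u-p)\<bullet>(u-p))*((v-p)\<bullet>(v-p))*((u-v)\<bullet>(u-v))"
    using tc pts unfolding thick_cond_def by auto
  have e1: "(u-p)\<bullet>(u-p) = \<epsilon>^2" using nau unfolding au_def
    by (simp add: power2_norm_eq_inner[symmetric] norm_minus_commute)
  have e2: "(v-p)\<bullet>(v-p) = \<epsilon>^2" using nav unfolding av_def
    by (simp add: power2_norm_eq_inner[symmetric] norm_minus_commute)
  have e3: "(u-p)\<bullet>(v-p) = Pv" unfolding Pv_def au_def av_def
    by (metis inner_minus_left inner_minus_right minus_diff_eq minus_minus)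
  have aa: "au\<bullet>au = \<epsilon>^2" using nau by (metis power2_norm_eq_inner)
  have bb: "av\<bullet>av = \<epsilon>^2" using nav by (metis power2_norm_eq_inner)
  have "u - v = av - au" unfolding au_def av_def by simp
  then have e4: "(u-v)\<bullet>(u-v) = 2*\<epsilon>^2 - 2*Pv"
    unfolding Pv_def
    by (simp add: inner_diff_left inner_diff_right inner_commute aa bb)
  have uv0: "(u-v)\<bullet>(u-v) > 0" using pts by simp
  have th2: "4*\<tau>^2*((\<epsilon>^2 - Pv)*(\<epsilon>^2 + Pv)) \<le> (\<epsilon>^2 - Pv) * (2*\<epsilon>^4)"
  proof -
    have "4*\<tau>^2*((\<epsilon>^2 - Pv)*(\<epsilon>^2 + Pv)) = 4*\<tau>^2*(\<epsilon>^2*\<epsilon>^2 - Pv^2)"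
      by (simp add: algebra_simps power2_eq_square)
    also have "\<dots> \<le> \<epsilon>^2*\<epsilon>^2*(2*\<epsilon>^2 - 2*Pv)" using th unfolding e1 e2 e3 e4 .
    also have "\<dots> = (\<epsilon>^2 - Pv) * (2*\<epsilon>^4)" by (simp add: algebra_simps power2_eq_square power4_eq_xxxx)
    finally show ?thesis .
  qed
  have pos: "\<epsilon>^2 - Pv > 0" using uv0 e4 by simp
  have th3: "4*\<tau>^2*(\<epsilon>^2 + Pv) \<le> 2*\<epsilon>^4"
    using th2 pos by (simp add: mult.assoc mult.left_commute[of _ "\<epsilon>^2 - Pv"])
  have "s \<bullet> s = 2*\<epsilon>^2 + 2*Pv" unfolding s_def Pv_def
    by (simp add: inner_add_left inner_add_right inner_commute aa bb)
  then have "(norm s)^2 * \<tau>^2 \<le> \<epsilon>^4" using th3 by (simp add: power2_norm_eq_inner algebra_simps)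
  then have "(norm s * \<tau>)^2 \<le> (\<epsilon>^2)^2" by (simp add: power_mult_distrib power4_eq_xxxx power2_eq_square mult_ac)
  then have "norm s * \<tau> \<le> \<epsilon>^2" by (rule power2_le_imp_le) simp
  then have ns: "norm s \<le> \<epsilon>^2 / \<tau>" using tp by (simp add: field_simps)
  have dd0: "dd \<ge> 0" unfolding dd_def by simp
  have "2*(C*\<epsilon>*(dd-\<epsilon>) - \<epsilon>^2) \<le> \<epsilon>^2 / \<tau> * dd"
    using sw sw2 mult_right_mono[OF ns dd0] by linarith
  then have "\<epsilon> * (2*(C*(dd-\<epsilon>) - \<epsilon>)) \<le> \<epsilon> * (\<epsilon> * dd / \<tau>)"
    by (simp add: algebra_simps power2_eq_square)
  then have "\<epsilon> * (2*(C*(dd-\<epsilon>) - \<epsilon>)) \<le> \<epsilon> * (\<epsilon> * dd / \<tau>)" by simp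
  then have "2*(C*(dd-\<epsilon>) - \<epsilon>) \<le> \<epsilon> * dd / \<tau>" using ep by (rule mult_left_le_imp_le)
  then have "2*C*dd \<le> \<epsilon> * (2*C + 2 + dd/\<tau>)" by (simp add: algebra_simps)
  also have "\<dots> \<le> \<epsilon> * (4 + dd/\<tau>)" using C01 ep by (intro mult_left_mono) auto
  finally show False using small unfolding dd_def C_def by simp
qed

lemma sp_inj:
  assumes "simple_path g" "s \<in> {0..1}" "t \<in> {0..1}" "g s = g t" "s \<noteq> t"
  shows "(s = 0 \<and> t = 1) \<or> (s = 1 \<and> t = 0)"
  using assms unfolding simple_path_def loop_free_def by blast

lemma not_all_out:
  assumes tc: "thick_cond \<tau> L" and tp: "\<tau> > 0"
    and sp: "simple_path g" and cl: "pathfinish g = pathstart g"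
    and img: "path_image g \<subseteq> L" and p: "g 0 = p"
    and q: "q \<in> L" "p \<noteq> q" and d: "dist p q < 2*\<tau>"
  shows "\<not> (\<forall>t\<in>{0<..<1}. outP \<tau> p q (g t))"
proof
  assume allout: "\<forall>t\<in>{0<..<1}. outP \<tau> p q (g t)"
  have gL: "g t \<in> L" if "t \<in> {0..1}" for t using img that unfolding path_image_def by blast
  have pL: "p \<in> L" using gL[of 0] p by simp
  have g1: "g 1 = p" using p cl unfolding pathfinish_def pathstart_def by simp
  define r where "r = dist p (g (1/2))"
  have "g (1/2) \<noteq> g 0" using sp_inj[OF sp, of "1/2" 0] by auto
  then have r0: "r > 0" unfolding r_def using p by simp
  define dd where "dd = dist p q"
  define C where "C = Cc \<tau> p q"
  have C0: "C > 0" using Cc_bounds[OF tp d] C_def by simp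
  have dd0: "dd > 0" using q unfolding dd_def by simp
  define \<epsilon> where "\<epsilon> = min (r/2) (C*dd/(4 + dd/\<tau>))"
  have den: "4 + dd/\<tau> > 0" using dd0 tp by (simp add: add_pos_nonneg)
  have ep0: "\<epsilon> > 0" unfolding \<epsilon>_def using r0 C0 dd0 den by simp
  have epr: "\<epsilon> < r" unfolding \<epsilon>_def using r0 by simp
  have "\<epsilon> * (4 + dd/\<tau>) \<le> C*dd" 
  proof -
    have "\<epsilon> \<le> C*dd/(4 + dd/\<tau>)" unfolding \<epsilon>_def by simp
    then show ?thesis using den by (simp add: field_simps)
  qed
  moreover have "C*dd > 0" using C0 dd0 by simp
  ultimately have small: "\<epsilon> * (4 + dd/\<tau>) < 2*C*dd" by linarith
  have cont: "continuous_on {0..1} (\<lambda>t. dist p (g t))"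
    using sp unfolding simple_path_def path_def by (intro continuous_intros) auto
  obtain t1 where t1: "0 \<le> t1" "t1 \<le> 1/2" "dist p (g t1) = \<epsilon>"
    using IVT'[of "\<lambda>t. dist p (g t)" 0 \<epsilon> "1/2"] cont p ep0 epr r_def
    by (force intro: continuous_on_subset)
  obtain t2 where t2: "1/2 \<le> t2" "t2 \<le> 1" "dist p (g t2) = \<epsilon>"
    using IVT2'[of "\<lambda>t. dist p (g t)" 1 \<epsilon> "1/2"] cont g1 ep0 epr r_def
    by (force intro: continuous_on_subset)
  have "t1 \<noteq> 0" using t1 p ep0 by auto
  moreover have "t1 \<noteq> 1/2"
  proof
    assume h: "t1 = 1/2"
    have "dist p (g t1) = r" unfolding h r_def ..
    then show False using t1 epr by simp
  qed
  ultimately have t1' : "0 < t1" "t1 < 1/2" using t1 by auto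
  have "t2 \<noteq> 1" using t2 g1 ep0 by auto
  moreover have "t2 \<noteq> 1/2"
  proof
    assume h: "t2 = 1/2"
    have "dist p (g t2) = r" unfolding h r_def ..
    then show False using t2 epr by simp
  qed
  ultimately have t2' : "1/2 < t2" "t2 < 1" using t2 by auto
  have uv: "g t1 \<noteq> g t2" using sp_inj[OF sp, of t1 t2] t1' t2' by auto
  have np: "g t1 \<noteq> p" "g t2 \<noteq> p" using t1 t2 ep0 by auto
  show False
    using loc_contra[OF tc tp pL gL[of t1] gL[of t2] uv np d, of \<epsilon>]
      allout t1 t2 t1' t2' ep0 small unfolding dd_def C_def by auto
qed

lemma outP_self: "outP \<tau> p q q"
  unfolding outP_def by simp

lemma two_arcs:
  assumes tc: "thick_cond \<tau> L" and tp: "\<tau> > 0"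
    and sp: "simple_path g" and cl: "pathfinish g = pathstart g"
    and img: "path_image g \<subseteq> L" and p: "g 0 = p"
    and t0: "0 < t0" "t0 < 1" and q: "g t0 = q" and d: "dist p q < 2*\<tau>"
  shows "(\<forall>t\<in>{0<..<t0}. lensP \<tau> p q (g t)) \<or> (\<forall>t\<in>{t0<..<1}. lensP \<tau> p q (g t))"
proof (rule ccontr)
  assume nc: "\<not> ?thesis"
  have gL: "g t \<in> L" if "t \<in> {0..1}" for t using img that unfolding path_image_def by blast
  have pL: "p \<in> L" using gL[of 0] p by simp
  have qL: "q \<in> L" using gL[of t0] q t0 by simp
  have pq: "p \<noteq> q" using sp_inj[OF sp, of 0 t0] p q t0 by auto
  have cg: "continuous_on {0..1} g" using sp unfolding simple_path_def path_def by simp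
  have S1: "connected (g ` {0<..<t0})" "g ` {0<..<t0} \<subseteq> L" "p \<notin> g ` {0<..<t0}" "q \<notin> g ` {0<..<t0}"
  proof -
    show "connected (g ` {0<..<t0})"
      by (rule connected_continuous_image[OF continuous_on_subset[OF cg]]) (use t0 in auto)
    show "g ` {0<..<t0} \<subseteq> L" using gL t0 by auto
    show "p \<notin> g ` {0<..<t0}"
    proof
      assume "p \<in> g ` {0<..<t0}"
      then obtain t where "t \<in> {0<..<t0}" "g t = p" by auto
      then show False using sp_inj[OF sp, of t 0] p t0 by auto
    qed
    show "q \<notin> g ` {0<..<t0}"
    proof
      assume "q \<in> g ` {0<..<t0}"
      then obtain t where "t \<in> {0<..<t0}" "g t = q" by auto
      then show False using sp_inj[OF sp, of t t0] q t0 by auto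
    qed
  qed
  have S2: "connected (g ` {t0<..<1})" "g ` {t0<..<1} \<subseteq> L" "p \<notin> g ` {t0<..<1}" "q \<notin> g ` {t0<..<1}"
  proof -
    show "connected (g ` {t0<..<1})"
      by (rule connected_continuous_image[OF continuous_on_subset[OF cg]]) (use t0 in auto)
    show "g ` {t0<..<1} \<subseteq> L" using gL t0 by auto
    show "p \<notin> g ` {t0<..<1}"
    proof
      assume "p \<in> g ` {t0<..<1}"
      then obtain t where "t \<in> {t0<..<1}" "g t = p" by auto
      then show False using sp_inj[OF sp, of t 0] p t0 by auto
    qed
    show "q \<notin> g ` {t0<..<1}"
    proof
      assume "q \<in> g ` {t0<..<1}"
      then obtain t where "t \<in> {t0<..<1}" "g t = q" by auto
      then show False using sp_inj[OF sp, of t t0] q t0 by auto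
    qed
  qed
  have o1: "\<forall>t\<in>{0<..<t0}. outP \<tau> p q (g t)"
    using dichotomy[OF tc tp S1 pL qL pq d] nc by auto
  have o2: "\<forall>t\<in>{t0<..<1}. outP \<tau> p q (g t)"
    using dichotomy[OF tc tp S2 pL qL pq d] nc by auto
  have "\<forall>t\<in>{0<..<1}. outP \<tau> p q (g t)"
  proof
    fix t assume t: "t \<in> {0<..<1::real}"
    consider "t < t0" | "t = t0" | "t > t0" by linarith
    then show "outP \<tau> p q (g t)"
      by cases (use o1 o2 t q outP_self in auto)
  qed
  then show False using not_all_out[OF tc tp sp cl img p qL pq d] by simp
qed

lemma other_comp:
  assumes tc: "thick_cond \<tau> L" and tp: "\<tau> > 0"
    and sp: "simple_path g" and cl: "pathfinish g = pathstart g"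
    and img: "path_image g \<subseteq> L" and p: "g 0 = p"
    and qL: "q \<in> L" and qn: "q \<notin> path_image g" and d: "dist p q < 2*\<tau>"
  shows "\<forall>t\<in>{0<..<1}. lensP \<tau> p q (g t)"
proof -
  have gL: "g t \<in> L" if "t \<in> {0..1}" for t using img that unfolding path_image_def by blast
  have pL: "p \<in> L" using gL[of 0] p by simp
  have pq: "p \<noteq> q" using qn p unfolding path_image_def by force
  have cg: "continuous_on {0..1} g" using sp unfolding simple_path_def path_def by simp
  have S1: "connected (g ` {0<..<1})" "g ` {0<..<1} \<subseteq> L" "p \<notin> g ` {0<..<1}" "q \<notin> g ` {0<..<1}"
  proof -
    show "connected (g ` {0<..<1})"
      by (rule connected_continuous_image[OF continuous_on_subset[OF cg]]) auto
    show "g ` {0<..<1} \<subseteq> L" using gL by auto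
    show "p \<notin> g ` {0<..<1}"
    proof
      assume "p \<in> g ` {0<..<1}"
      then obtain t where "t \<in> {0<..<1}" "g t = p" by auto
      then show False using sp_inj[OF sp, of t 0] p by auto
    qed
    show "q \<notin> g ` {0<..<1}" using qn unfolding path_image_def by auto
  qed
  show ?thesis using dichotomy[OF tc tp S1 pL qL pq d] not_all_out[OF tc tp sp cl img p qL pq d]
    by auto
qed

lemma sin_sq_identity:
  fixes A B :: real
  shows "(sin A)^2 + (sin B)^2 + 2 * sin A * sin B * cos (A + B) = (sin (A + B))^2"
proof -
  have a: "(cos A)^2 = 1 - (sin A)^2" and b: "(cos B)^2 = 1 - (sin B)^2"
    by (simp_all add: cos_squared_eq)
  have "(sin (A + B))^2 = (sin A * cos B + cos A * sin B)^2" by (simp add: sin_add)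
  also have "\<dots> = (sin A)^2 * (cos B)^2 + (cos A)^2 * (sin B)^2 + 2 * sin A * sin B * (cos A * cos B)"
    by (simp add: power2_eq_square algebra_simps)
  also have "\<dots> = (sin A)^2 + (sin B)^2 + 2 * sin A * sin B * (cos A * cos B - sin A * sin B)"
    unfolding a b by (simp add: power2_eq_square algebra_simps)
  also have "\<dots> = (sin A)^2 + (sin B)^2 + 2 * sin A * sin B * cos (A + B)"
    by (simp add: cos_add)
  finally show ?thesis by simp
qed

lemma trig_core:
  fixes s1 s2 sa :: real
  assumes "0 \<le> s1" "s1 \<le> 1" "0 \<le> s2" "s2 \<le> sa" "sa \<le> 1"
    and h: "s1^2 + s2^2 + 2 * sqrt (1 - sa^2) * s1 * s2 \<le> sa^2"
  shows "arcsin s1 + arcsin s2 \<le> arcsin sa"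
proof (rule ccontr)
  assume "\<not> ?thesis"
  then have gt: "arcsin s1 + arcsin s2 > arcsin sa" by simp
  define al where "al = arcsin sa"
  define a1 where "a1 = arcsin s1"
  define a2 where "a2 = arcsin s2"
  define be where "be = al - a2"
  have sa0: "0 \<le> sa" using assms by simp
  have al: "0 \<le> al" "al \<le> pi/2" "sin al = sa" "cos al = sqrt (1 - sa^2)"
    unfolding al_def using assms sa0 arcsin_ubound[of sa] by (auto simp: arcsin_nonneg cos_arcsin)
  have a1: "0 \<le> a1" "a1 \<le> pi/2" "sin a1 = s1"
    unfolding a1_def using assms arcsin_ubound[of s1] by (auto simp: arcsin_nonneg)
  have a2: "0 \<le> a2" "a2 \<le> pi/2" "sin a2 = s2"
    unfolding a2_def using assms arcsin_ubound[of s2] by (auto simp: arcsin_nonneg)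
  have "a2 \<le> al" unfolding a2_def al_def using assms by (intro arcsin_le_arcsin) auto
  then have be0: "0 \<le> be" unfolding be_def by simp
  have be1: "be < a1" using gt unfolding be_def al_def a1_def a2_def by simp
  have "sin be < sin a1"
    using be0 be1 a1 by (subst sin_mono_less_eq) auto
  moreover have sb0: "sin be \<ge> 0" using be0 be1 a1 by (intro sin_ge_zero) auto
  ultimately have sq: "(sin be)^2 < s1^2" using a1 by (intro power_strict_mono) auto
  have "sa^2 \<le> 1" using sa0 assms by (simp add: power_le_one)
  then have C0: "sqrt (1 - sa^2) \<ge> 0" by simp
  have "2 * sqrt (1 - sa^2) * sin be * s2 \<le> 2 * sqrt (1 - sa^2) * s1 * s2"
    using \<open>sin be < sin a1\<close> a1 C0 assms by (intro mult_right_mono mult_left_mono) auto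
  moreover have "(sin be)^2 + (sin a2)^2 + 2 * sin be * sin a2 * cos (be + a2) = (sin (be + a2))^2"
    by (rule sin_sq_identity)
  moreover have "be + a2 = al" unfolding be_def by simp
  ultimately have "sa^2 < s1^2 + s2^2 + 2 * sqrt (1 - sa^2) * s1 * s2"
    using sq al a2 by (simp add: mult_ac)
  then show False using h by simp
qed

definition Fa :: "real \<Rightarrow> real \<Rightarrow> real" where
  "Fa \<tau> r = 2*\<tau>*arcsin (r/(2*\<tau>))"

lemma trig_add:
  fixes a b c :: "real^3"
  assumes tp: "\<tau> > 0" and d: "dist a c < 2*\<tau>" and l: "lensP \<tau> a c b"
    and ba: "b \<noteq> a" and bc: "b \<noteq> c"
  shows "Fa \<tau> (dist a b) + Fa \<tau> (dist b c) \<le> Fa \<tau> (dist a c)"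
proof -
  define p where "p = dist a b"
  define q where "q = dist b c"
  define r where "r = dist a c"
  define C where "C = Cc \<tau> a c"
  have pr: "p < r" "q < r"
    using lens_closer[OF tp d l ba bc] unfolding p_def q_def r_def
    by (auto simp: dist_commute)
  have np: "norm (a-b) = p" "norm (c-b) = q" unfolding p_def q_def by (auto simp: dist_norm norm_minus_commute)
  have P: "(a-b)\<bullet>(c-b) \<le> - (C*p*q)" using l np unfolding lensP_def C_def by simp
  have "r^2 = ((a-b)-(c-b))\<bullet>((a-b)-(c-b))" unfolding r_def
    by (simp add: dist_norm power2_norm_eq_inner)
  also have "\<dots> = (a-b)\<bullet>(a-b) + (c-b)\<bullet>(c-b) - 2*((a-b)\<bullet>(c-b))"
    by (simp only: inner_diff_left inner_diff_right inner_commute) simp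
  also have "\<dots> = p^2 + q^2 - 2*((a-b)\<bullet>(c-b))"
    using np by (simp flip: power2_norm_eq_inner)
  finally have r2: "r^2 \<ge> p^2 + q^2 + 2*C*p*q" using P by simp
  define s1 where "s1 = p/(2*\<tau>)"
  define s2 where "s2 = q/(2*\<tau>)"
  define sa where "sa = r/(2*\<tau>)"
  have Csa: "C = sqrt (1 - sa^2)" unfolding C_def Cc_def sa_def r_def
    by (simp add: power_divide power_mult_distrib)
  have p0: "p \<ge> 0" "q \<ge> 0" unfolding p_def q_def by auto
  have r2t: "r < 2*\<tau>" using d r_def by simp
  have h: "s1^2 + s2^2 + 2 * sqrt (1 - sa^2) * s1 * s2 \<le> sa^2"
  proof -
    have "(2*\<tau>)^2 * (s1^2 + s2^2 + 2 * C * s1 * s2) = p^2 + q^2 + 2*C*p*q"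
      unfolding s1_def s2_def using tp by (simp add: field_simps power2_eq_square)
    also have "\<dots> \<le> r^2" by (rule r2)
    also have "\<dots> = (2*\<tau>)^2 * sa^2" unfolding sa_def using tp by (simp add: field_simps power2_eq_square)
    finally show ?thesis unfolding Csa[symmetric] using tp
      by (simp add: mult_le_cancel_left)
  qed
  have "arcsin s1 + arcsin s2 \<le> arcsin sa"
    by (rule trig_core[OF _ _ _ _ _ h]) (use p0 pr r2t tp in \<open>auto simp: s1_def s2_def sa_def divide_right_mono\<close>)
  then have "2*\<tau>*(arcsin s1 + arcsin s2) \<le> 2*\<tau>*arcsin sa" using tp by simp
  then show ?thesis unfolding Fa_def s1_def s2_def sa_def p_def q_def r_def
    by (simp add: algebra_simps)
qed

lemma jordan_ineq:
  fixes t :: real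
  assumes "0 \<le> t" "t \<le> 1"
  shows "t \<le> sin (t * (pi/2))"
proof -
  have cv: "convex_on {0..pi/2} (\<lambda>x. - sin x)"
  proof (rule f''_ge0_imp_convex[where f'="\<lambda>x. - cos x" and f''="\<lambda>x. sin x"])
    show "convex {0..pi/2::real}" by simp
    fix x :: real assume x: "x \<in> {0..pi/2}"
    show "((\<lambda>x. - sin x) has_real_derivative - cos x) (at x)"
      by (auto intro!: derivative_eq_intros)
    show "((\<lambda>x. - cos x) has_real_derivative sin x) (at x)"
      by (auto intro!: derivative_eq_intros)
    show "sin x \<ge> 0" using x by (intro sin_ge_zero) auto
  qed
  have "- sin ((1 - t) *\<^sub>R 0 + t *\<^sub>R (pi/2)) \<le> (1 - t) * (- sin 0) + t * (- sin (pi/2))"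
    by (rule convex_onD[OF cv]) (use assms in auto)
  then show ?thesis by (simp add: mult.commute)
qed

lemma Fa_0: "Fa \<tau> 0 = 0" unfolding Fa_def by simp

lemma Fa_ge:
  assumes "\<tau> > 0" "0 \<le> r" "r \<le> 2*\<tau>"
  shows "r \<le> Fa \<tau> r"
proof -
  define u where "u = r/(2*\<tau>)"
  have u: "0 \<le> u" "u \<le> 1" unfolding u_def using assms by auto
  have "u = sin (arcsin u)" using u by simp
  also have "\<dots> \<le> arcsin u" using u by (intro sin_x_le_x arcsin_nonneg) auto
  finally have "2*\<tau>*u \<le> 2*\<tau>*arcsin u" using assms by simp
  then show ?thesis unfolding Fa_def u_def using assms by simp
qed

lemma Fa_le:
  assumes "\<tau> > 0" "0 \<le> r" "r \<le> 2*\<tau>"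
  shows "Fa \<tau> r \<le> pi/2 * r"
proof -
  define u where "u = r/(2*\<tau>)"
  have u: "0 \<le> u" "u \<le> 1" unfolding u_def using assms by auto
  define t where "t = arcsin u / (pi/2)"
  have a: "0 \<le> arcsin u" "arcsin u \<le> pi/2" using u arcsin_ubound[of u] by (auto intro: arcsin_nonneg)
  have t: "0 \<le> t" "t \<le> 1" unfolding t_def using a by auto
  have "t \<le> sin (t * (pi/2))" by (rule jordan_ineq[OF t])
  also have "t * (pi/2) = arcsin u" unfolding t_def by simp
  finally have "arcsin u / (pi/2) \<le> u" using u unfolding t_def by simp
  then have "arcsin u \<le> pi/2 * u" by (simp add: field_simps)
  then have "2*\<tau>*arcsin u \<le> 2*\<tau>*(pi/2 * u)" using assms by simp
  then show ?thesis unfolding Fa_def u_def using assms by simp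
qed

lemma chain_mono:
  fixes t :: "nat \<Rightarrow> real"
  assumes "\<forall>i<n. t i \<le> t (Suc i)" "i \<le> j" "j \<le> n"
  shows "t i \<le> t j"
  using assms(2,3)
proof (induction j)
  case 0 then show ?case by simp
next
  case (Suc j)
  show ?case
  proof (cases "i = Suc j")
    case True then show ?thesis by simp
  next
    case False
    then have "i \<le> j" using Suc.prems by simp
    then have "t i \<le> t j" using Suc by simp
    also have "t j \<le> t (Suc j)" using assms(1) Suc.prems by simp
    finally show ?thesis .
  qed
qed

lemma main_arc:
  assumes tc: "thick_cond \<tau> L" and tp: "\<tau> > 0"
    and sp: "simple_path g" and cl: "pathfinish g = pathstart g"
    and img: "path_image g \<subseteq> L" and gx: "g 0 = x"
    and t0: "0 < t0" "t0 < 1" and gy: "g t0 = y" and d: "dist x y < 2*\<tau>"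
    and lall: "\<forall>t\<in>{0<..<t0}. lensP \<tau> x y (g t)"
  shows "\<exists>h. path h \<and> path_image h \<subseteq> L \<and> pathstart h = x \<and> pathfinish h = y \<and>
             arc h \<and> path_length h \<le> ereal (Fa \<tau> (dist x y))"
proof -
  have gne: "g s \<noteq> x" if "0 < s" "s < 1" for s
    using sp_inj[OF sp, of s 0] that gx by auto
  have xy: "x \<noteq> y" using gne[OF t0] gy by simp
  have dle: "dist x (g s) \<le> dist x y" if "0 < s" "s \<le> t0" for s
  proof (cases "s = t0")
    case True then show ?thesis using gy by simp
  next
    case False
    then have "lensP \<tau> x y (g s)" using lall that by auto
    moreover have "g s \<noteq> y" using sp_inj[OF sp, of s t0] that t0 gy False by auto
    ultimately show ?thesis using lens_closer(1)[OF tp d _ gne] that t0 by fastforce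
  qed
  have nest: "lensP \<tau> x (g s) (g t)" if s: "0 < s" "s \<le> t0" and t: "0 < t" "t < s" for s t
  proof (cases "s = t0")
    case True then show ?thesis using lall t gy by auto
  next
    case False
    have ds: "dist x (g s) < 2*\<tau>" using dle[OF s] d by simp
    have "(\<forall>t\<in>{0<..<s}. lensP \<tau> x (g s) (g t)) \<or> (\<forall>t\<in>{s<..<1}. lensP \<tau> x (g s) (g t))"
      by (rule two_arcs[OF tc tp sp cl img gx]) (use s t0 ds in auto)
    then show ?thesis
    proof
      assume "\<forall>t\<in>{0<..<s}. lensP \<tau> x (g s) (g t)"
      then show ?thesis using t by auto
    next
      assume "\<forall>t\<in>{s<..<1}. lensP \<tau> x (g s) (g t)"
      then have l1: "lensP \<tau> x (g s) y" using False s t0 gy by force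
      have ys: "y \<noteq> g s" using sp_inj[OF sp, of s t0] s t0 gy False by auto
      have "dist x y < dist x (g s)" using lens_closer(1)[OF tp ds l1 xy[symmetric] ys] .
      moreover have "lensP \<tau> x y (g s)" using lall s False by auto
      then have "dist x (g s) < dist x y"
        using lens_closer(1)[OF tp d _ gne ys[symmetric]] s t0 by auto
      ultimately show ?thesis by simp
    qed
  qed
  have step: "Fa \<tau> (dist x (g s1)) + dist (g s1) (g s2) \<le> Fa \<tau> (dist x (g s2))"
    if ss: "0 \<le> s1" "s1 \<le> s2" "s2 \<le> t0" for s1 s2
  proof -
    consider "s1 = s2" | "s1 = 0" "s1 < s2" | "0 < s1" "s1 < s2" using ss by linarith
    then show ?thesis
    proof cases
      case 1 then show ?thesis by simp
    next
      case 2
      then have "dist x (g s2) \<le> dist x y" using dle that by simp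
      then have "dist x (g s2) \<le> Fa \<tau> (dist x (g s2))" using d tp by (intro Fa_ge) auto
      then show ?thesis using 2 gx by (simp add: Fa_0)
    next
      case 3
      have ds: "dist x (g s2) < 2*\<tau>" using dle[of s2] d 3 that by simp
      have l: "lensP \<tau> x (g s2) (g s1)" using nest[of s2 s1] 3 that by simp
      have b1: "g s1 \<noteq> x" using gne[of s1] 3 that t0 by simp
      have b2: "g s1 \<noteq> g s2" using sp_inj[OF sp, of s1 s2] 3 that t0 by auto
      have "Fa \<tau> (dist x (g s1)) + Fa \<tau> (dist (g s1) (g s2)) \<le> Fa \<tau> (dist x (g s2))"
        by (rule trig_add[OF tp ds l b1 b2])
      moreover have "dist (g s1) (g s2) \<le> Fa \<tau> (dist (g s1) (g s2))"
      proof -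
        have "dist (g s2) (g s1) < dist x (g s2)" by (rule lens_closer(2)[OF tp ds l b1 b2])
        then show ?thesis using ds tp by (intro Fa_ge) (auto simp: dist_commute)
      qed
      ultimately show ?thesis by simp
    qed
  qed
  define h where "h = subpath 0 t0 g"
  have hv: "h u = g (t0 * u)" for u unfolding h_def subpath_def by simp
  have hp: "path h" unfolding h_def using sp t0 by (simp add: simple_path_imp_path)
  have hi: "path_image h \<subseteq> L" unfolding h_def using path_image_subpath_subset[of 0 t0 g] img t0 by auto
  have hs: "pathstart h = x" "pathfinish h = y" unfolding h_def using gx gy by auto
  have ha: "arc h" unfolding h_def using arc_simple_path_subpath[OF sp, of 0 t0] t0 gx gy xy by auto
  have hl: "path_length h \<le> ereal (Fa \<tau> (dist x y))"
    unfolding path_length_def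
  proof (rule SUP_least)
    fix nt :: "nat \<times> (nat \<Rightarrow> real)" assume "nt \<in> {(n, t). t 0 = 0 \<and> t n = 1 \<and> (\<forall>i<n. t i \<le> t (Suc i))}"
    then obtain n and t :: "nat \<Rightarrow> real" where nt: "nt = (n, t)" and t: "t 0 = 0" "t n = 1" "\<forall>i<n. t i \<le> t (Suc i)"
      by auto
    have tr: "0 \<le> t i \<and> t i \<le> 1" if "i \<le> n" for i
      using chain_mono[OF t(3), of 0 i] chain_mono[OF t(3), of i n] that t by auto
    have claim: "m \<le> n \<Longrightarrow> (\<Sum>i<m. dist (h (t i)) (h (t (Suc i)))) \<le> Fa \<tau> (dist x (h (t m)))" for m
    proof (induction m)
      case 0 then show ?case using hv t gx by (simp add: Fa_0)
    next
      case (Suc m)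
      have "(\<Sum>i<Suc m. dist (h (t i)) (h (t (Suc i))))
            = (\<Sum>i<m. dist (h (t i)) (h (t (Suc i)))) + dist (h (t m)) (h (t (Suc m)))" by simp
      also have "\<dots> \<le> Fa \<tau> (dist x (h (t m))) + dist (h (t m)) (h (t (Suc m)))"
        using Suc by simp
      also have "\<dots> \<le> Fa \<tau> (dist x (h (t (Suc m))))"
        unfolding hv
      proof (rule step)
        show "0 \<le> t0 * t m" using tr[of m] Suc.prems t0 by simp
        show "t0 * t m \<le> t0 * t (Suc m)" using t(3) Suc.prems t0 by simp
        show "t0 * t (Suc m) \<le> t0" using tr[of "Suc m"] Suc.prems t0 by simp
      qed
      finally show ?case .
    qed
    have "(\<Sum>i<n. dist (h (t i)) (h (t (Suc i)))) \<le> Fa \<tau> (dist x y)"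
      using claim[of n] hv t gy by simp
    then show "(case nt of (n, t) \<Rightarrow> ereal (\<Sum>i<n. dist (h (t i)) (h (t (Suc i)))))
               \<le> ereal (Fa \<tau> (dist x y))" unfolding nt by simp
  qed
  show ?thesis using hp hi hs ha hl by blast
qed

lemma base_at:
  assumes "simple_closed_curve C" "x \<in> C"
  shows "\<exists>g. simple_path g \<and> pathfinish g = pathstart g \<and> path_image g = C \<and> g 0 = x"
proof -
  obtain g0 where g0: "simple_path g0" "pathstart g0 = pathfinish g0" "path_image g0 = C"
    using assms(1) unfolding simple_closed_curve_def by blast
  obtain a where a: "a \<in> {0..1}" "g0 a = x" using assms(2) g0(3) unfolding path_image_def by auto
  define g where "g = shiftpath a g0"
  have "simple_path g" unfolding g_def using simple_path_shiftpath[OF g0(1) g0(2)[symmetric]] a by auto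
  moreover have "pathfinish g = pathstart g" unfolding g_def using closed_shiftpath[OF g0(2)[symmetric] a(1)] .
  moreover have "path_image g = C" unfolding g_def using path_image_shiftpath[OF a(1) g0(2)[symmetric]] g0(3) by simp
  moreover have "g 0 = x" using pathstart_shiftpath[of a g0] a unfolding g_def pathstart_def by auto
  ultimately show ?thesis by blast
qed

lemma const_length: "path_length (\<lambda>_. x) \<le> ereal 0"
  unfolding path_length_def by (rule SUP_least) auto

theorem lemma5:
  fixes L :: "(real^3) set" and \<tau> :: real and x y :: "real^3"
  assumes "is_link L"
    and "thickness L = ereal \<tau>" and "\<tau> > 0"
    and "x \<in> L" and "y \<in> L" and "dist x y < 2 * \<tau>"
  shows "(\<exists>g. path g \<and> path_image g \<subseteq> L \<and> pathstart g = x \<and> pathfinish g = y \<and>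
             (x \<noteq> y \<longrightarrow> arc g) \<and>
             path_length g \<le> ereal (2 * \<tau> * arcsin (dist x y / (2 * \<tau>)))) \<and>
         2 * \<tau> * arcsin (dist x y / (2 * \<tau>)) \<le> pi / 2 * dist x y"
proof
  have tp: "\<tau> > 0" by fact
  have d: "dist x y < 2*\<tau>" using assms(6) by simp
  have tc: "thick_cond \<tau> L" using thick_from[OF assms(2,3)] .
  show "2 * \<tau> * arcsin (dist x y / (2 * \<tau>)) \<le> pi / 2 * dist x y"
    using Fa_le[OF tp, of "dist x y"] d unfolding Fa_def by simp
  show "\<exists>g. path g \<and> path_image g \<subseteq> L \<and> pathstart g = x \<and> pathfinish g = y \<and>
             (x \<noteq> y \<longrightarrow> arc g) \<and>
             path_length g \<le> ereal (2 * \<tau> * arcsin (dist x y / (2 * \<tau>)))"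
  proof (cases "x = y")
    case True
    have "path (\<lambda>_. x)" by (simp add: path_def)
    moreover have "path_image (\<lambda>_::real. x) \<subseteq> L" using assms(4) by (auto simp: path_image_def)
    ultimately show ?thesis using True const_length[of x]
      by (intro exI[of _ "\<lambda>_. x"]) (auto simp: pathstart_def pathfinish_def)
  next
    case False
    have FF: "Fa \<tau> (dist x y) = 2 * \<tau> * arcsin (dist x y / (2 * \<tau>))" unfolding Fa_def ..
    obtain CC where CC: "finite CC" "\<forall>C\<in>CC. simple_closed_curve C" "\<Union>CC = L"
      using assms(1) unfolding is_link_def by blast
    obtain C where C: "C \<in> CC" "x \<in> C" using CC(3) assms(4) by blast
    have CL: "C \<subseteq> L" using C CC(3) by blast
    obtain g where g: "simple_path g" "pathfinish g = pathstart g" "path_image g = C" "g 0 = x"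
      using base_at[of C x] CC(2) C by blast
    have img: "path_image g \<subseteq> L" using g(3) CL by simp
    have g1: "g 1 = x" using g(2,4) unfolding pathfinish_def pathstart_def by simp
    show ?thesis
    proof (cases "y \<in> C")
      case True
      obtain t0 where t0: "t0 \<in> {0..1}" "g t0 = y" using True g(3) unfolding path_image_def by auto
      have t0': "0 < t0" "t0 < 1" using t0 g(4) g1 False by (auto simp: le_less)
      have "(\<forall>t\<in>{0<..<t0}. lensP \<tau> x y (g t)) \<or> (\<forall>t\<in>{t0<..<1}. lensP \<tau> x y (g t))"
        by (rule two_arcs[OF tc tp g(1,2) img g(4) t0' t0(2) d])
      then show ?thesis
      proof
        assume "\<forall>t\<in>{0<..<t0}. lensP \<tau> x y (g t)"
        from main_arc[OF tc tp g(1,2) img g(4) t0' t0(2) d this] show ?thesis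
          unfolding FF by blast
      next
        assume l2: "\<forall>t\<in>{t0<..<1}. lensP \<tau> x y (g t)"
        define g' where "g' = reversepath g"
        have g'v: "g' t = g (1 - t)" for t unfolding g'_def reversepath_def by simp
        have sp': "simple_path g'" unfolding g'_def using simple_path_reversepath[OF g(1)] .
        have cl': "pathfinish g' = pathstart g'" unfolding g'_def using g(2) by simp
        have img': "path_image g' \<subseteq> L" unfolding g'_def using img by simp
        have g'0: "g' 0 = x" using g'v g1 by simp
        have g'y: "g' (1 - t0) = y" using g'v t0 by simp
        have l2': "\<forall>t\<in>{0<..<1 - t0}. lensP \<tau> x y (g' t)" using l2 g'v by auto
        have t0'': "0 < 1 - t0" "1 - t0 < 1" using t0' by auto
        from main_arc[OF tc tp sp' cl' img' g'0 t0'' g'y d l2'] show ?thesis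
          unfolding FF by blast
      qed
    next
      case False
      have yL: "y \<in> L" by fact
      have lx: "\<forall>t\<in>{0<..<1}. lensP \<tau> x y (g t)"
        using other_comp[OF tc tp g(1,2) img g(4) yL] False g(3) d by simp
      define u where "u = g (1/2)"
      have ux: "u \<noteq> x" using sp_inj[OF g(1), of "1/2" 0] g(4) unfolding u_def by auto
      have uy: "u \<noteq> y" using False g(3) unfolding u_def path_image_def by auto
      have lu: "lensP \<tau> x y u" using lx unfolding u_def by simp
      have du: "dist y u < dist x y" using lens_closer(2)[OF tp d lu ux uy] .
      have duy: "dist u y < 2*\<tau>" using du d by (simp add: dist_commute)
      have uC: "u \<in> C" using g(3) unfolding u_def path_image_def by auto
      obtain g2 where g2: "simple_path g2" "pathfinish g2 = pathstart g2" "path_image g2 = C" "g2 0 = u"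
        using base_at[of C u] CC(2) C uC by blast
      have img2: "path_image g2 \<subseteq> L" using g2(3) CL by simp
      have l2: "\<forall>t\<in>{0<..<1}. lensP \<tau> u y (g2 t)"
        using other_comp[OF tc tp g2(1,2) img2 g2(4) yL] False g2(3) duy by simp
      obtain s where s: "s \<in> {0..1}" "g2 s = x" using C(2) g2(3) unfolding path_image_def by auto
      have g21: "g2 1 = u" using g2(2,4) unfolding pathfinish_def pathstart_def by simp
      have s': "0 < s" "s < 1" using s g2(4) g21 ux by (auto simp: le_less)
      have lxu: "lensP \<tau> u y x" using l2 s s' by auto
      have "dist y x < dist u y" using lens_closer(2)[OF tp duy lxu ux[symmetric] \<open>x \<noteq> y\<close>] .
      then show ?thesis using du by (simp add: dist_commute)
    qed
  qed
qed

end
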